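(* Let $M\ge1$. Then $\kappa(\mathsf{S}_M)=\mathfrak{L}_M$, and for every $k\in\mathfrak{L}_M$, $$\{\beta(\mathsf{p}):\mathsf{p}\in\mathsf{S}_M,\ \kappa(\mathsf{p})=k\}=\{b\in\mathbb{Z}^{M+1}:\min\{\mathbb{1},\tilde k\}\le b\le\min\{k,\tilde k\}\},$$ equivalently the Cartesian product $V_0\times\cdots\times V_M$ with $V_n=\{\min\{1,\tilde k_n\},\ldots,\min\{k_n,\tilde k_n\}\}$.
   Context: Scattering sequences: $\mathsf{S}_M$ is the set of integer sequences $\mathsf{p}=(i_0,\ldots,i_L)$ with $L\ge2$, $i_0=i_L=-1$, $i_j\in\{0,\ldots,M\}$ for $1\le j\le L-1$, and $|i_{j+1}-i_j|=1$ for $0\le j\le L-1$ ($i_j=m$ means the pulse is at depth $z_m$). Transit count vector $\kappa(\mathsf{p})=(k_0,\ldots,k_M)$: for $0\le n\le M$, $k_n$ is the number of maximal blocks of consecutive indices $j\in\{0,\ldots,L\}$ with $i_j\ge n$. Branch count vector $\beta(\mathsf{p})=(b_0,\ldots,b_M)$: $b_n$ is the number of those maximal blocks containing at least two indices. $\mathfrak{L}_M\subset\mathbb{Z}^{M+1}_{\geq0}$: all $k$ with $k_0=1$ and $k_n>0\Rightarrow k_{n-1}>0$ ($1\le n\le M$). $\tilde k=(k_1,\ldots,k_M,0)$; $\mathbb{1}=(1,\ldots,1)$; inequalities and $\min$ are entrywise. *)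

theory Defs
  imports Main
begin

text \<open>A scattering sequence p = (i_0,...,i_L) is represented as an int list of length L+1;
  vectors in Z^(M+1) are int lists of length M+1 (entry n = coordinate n).\<close>

definition scattering_seqs :: "nat \<Rightarrow> int list set" where
  "scattering_seqs M = {p. length p \<ge> 3 \<and> p ! 0 = -1 \<and> p ! (length p - 1) = -1
     \<and> (\<forall>j. 1 \<le> j \<and> j \<le> length p - 2 \<longrightarrow> 0 \<le> p ! j \<and> p ! j \<le> int M)
     \<and> (\<forall>j. j < length p - 1 \<longrightarrow> \<bar>p ! (Suc j) - p ! j\<bar> = 1)}"

definition blocks :: "int list \<Rightarrow> nat \<Rightarrow> (nat \<times> nat) set" where
  "blocks p n = {(a, b). a \<le> b \<and> b < length p
     \<and> (\<forall>j. a \<le> j \<and> j \<le> b \<longrightarrow> p ! j \<ge> int n)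
     \<and> (a = 0 \<or> p ! (a - 1) < int n)
     \<and> (b = length p - 1 \<or> p ! (Suc b) < int n)}"

definition kappa :: "nat \<Rightarrow> int list \<Rightarrow> int list" where
  "kappa M p = map (\<lambda>n. int (card (blocks p n))) [0..<Suc M]"

definition beta :: "nat \<Rightarrow> int list \<Rightarrow> int list" where
  "beta M p = map (\<lambda>n. int (card {(a, b) \<in> blocks p n. a < b})) [0..<Suc M]"

definition frakL :: "nat \<Rightarrow> int list set" where
  "frakL M = {k. length k = Suc M \<and> (\<forall>n \<le> M. k ! n \<ge> 0) \<and> k ! 0 = 1
     \<and> (\<forall>n. 1 \<le> n \<and> n \<le> M \<longrightarrow> k ! n > 0 \<longrightarrow> k ! (n - 1) > 0)}"

definition ktilde :: "int list \<Rightarrow> int list" where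
  "ktilde k = tl k @ [0]"

end

theory Submission
  imports Defs
begin


fun cnt2 :: "int \<Rightarrow> int \<Rightarrow> int list \<Rightarrow> nat" where
  "cnt2 x y (a # b # r) = (if a = x \<and> b = y then 1 else 0) + cnt2 x y (b # r)"
| "cnt2 x y _ = 0"

fun cnt3 :: "int \<Rightarrow> int \<Rightarrow> int \<Rightarrow> int list \<Rightarrow> nat" where
  "cnt3 x y z (a # b # c # r) = (if a = x \<and> b = y \<and> c = z then 1 else 0) + cnt3 x y z (b # c # r)"
| "cnt3 x y z _ = 0"

fun stp :: "int list \<Rightarrow> bool" where
  "stp (a # b # r) = (\<bar>b - a\<bar> = 1 \<and> stp (b # r))"
| "stp _ = True"

lemma cnt2_Cons: "cnt2 x y (a # r) = (if r \<noteq> [] \<and> a = x \<and> hd r = y then 1 else 0) + cnt2 x y r"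
  by (cases r) auto

lemma cnt3_Cons: "cnt3 x y z (a # r) = (if 2 \<le> length r \<and> a = x \<and> r ! 0 = y \<and> r ! 1 = z then 1 else 0) + cnt3 x y z r"
  by (cases r rule: stp.cases) auto

lemma cnt2_append:
  "cnt2 x y (xs @ ys) = cnt2 x y xs + cnt2 x y ys + cnt2 x y (drop (length xs - 1) xs @ take 1 ys)"
proof (induction xs)
  case Nil
  then show ?case by (cases ys) (auto simp: cnt2_Cons)
next
  case (Cons a xs)
  then show ?case by (cases xs; cases ys) (auto simp: cnt2_Cons)
qed

lemma cnt3_append:
  "cnt3 x y z (xs @ ys) = cnt3 x y z xs + cnt3 x y z ys + cnt3 x y z (drop (length xs - 2) xs @ take 2 ys)"
proof (induction xs)
  case Nil
  then show ?case by (cases ys rule: stp.cases) (auto simp: cnt3_Cons)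
next
  case (Cons a xs)
  then show ?case by (cases xs rule: stp.cases; cases ys rule: stp.cases) (auto simp: cnt3_Cons nth_append)
qed

lemma stp_Cons: "stp (a # r) = (stp r \<and> (r \<noteq> [] \<longrightarrow> \<bar>hd r - a\<bar> = 1))"
  by (cases r) auto

lemma stp_append:
  "stp (xs @ ys) = (stp xs \<and> stp ys \<and> (xs \<noteq> [] \<longrightarrow> ys \<noteq> [] \<longrightarrow> \<bar>hd ys - last xs\<bar> = 1))"
  by (induction xs) (auto simp: stp_Cons)


lemma stp_iff: "stp xs = (\<forall>j. Suc j < length xs \<longrightarrow> \<bar>xs ! Suc j - xs ! j\<bar> = 1)"
proof (induction xs)
  case (Cons a r)
  have eq: "(\<forall>j. Suc j < length (a # r) \<longrightarrow> \<bar>(a # r) ! Suc j - (a # r) ! j\<bar> = 1) =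
        ((r \<noteq> [] \<longrightarrow> \<bar>hd r - a\<bar> = 1) \<and> (\<forall>j. Suc j < length r \<longrightarrow> \<bar>r ! Suc j - r ! j\<bar> = 1))"
    (is "?L = ?R")
  proof
    assume L: ?L
    have "r \<noteq> [] \<longrightarrow> \<bar>hd r - a\<bar> = 1" using L[rule_format, of 0] by (cases r) auto
    moreover have "\<forall>j. Suc j < length r \<longrightarrow> \<bar>r ! Suc j - r ! j\<bar> = 1"
      using L by (metis Suc_less_eq length_Cons nth_Cons_Suc)
    ultimately show ?R by blast
  next
    assume R: ?R
    show ?L
    proof (intro allI impI)
      fix j assume "Suc j < length (a # r)"
      then show "\<bar>(a # r) ! Suc j - (a # r) ! j\<bar> = 1"
        using R by (cases j) (auto simp: hd_conv_nth)
    qed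
  qed
  show ?case unfolding eq stp_Cons Cons.IH by blast
qed simp


lemma cnt2_card: "card {j. Suc j < length xs \<and> xs ! j = x \<and> xs ! Suc j = y} = cnt2 x y xs"
proof (induction xs)
  case (Cons a r)
  let ?S = "{j. Suc j < length r \<and> r ! j = x \<and> r ! Suc j = y}"
  have e: "{j. Suc j < length (a # r) \<and> (a # r) ! j = x \<and> (a # r) ! Suc j = y}
     = {j. j = 0 \<and> r \<noteq> [] \<and> a = x \<and> hd r = y} \<union> Suc ` ?S"
  proof (rule set_eqI)
    fix j show "j \<in> {j. Suc j < length (a # r) \<and> (a # r) ! j = x \<and> (a # r) ! Suc j = y} \<longleftrightarrow>
       j \<in> {j. j = 0 \<and> r \<noteq> [] \<and> a = x \<and> hd r = y} \<union> Suc ` ?S"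
      by (cases j) (auto simp: hd_conv_nth)
  qed
  have "finite ?S" by (rule finite_subset[of _ "{..<length r}"]) auto
  let ?A = "{j::nat. j = 0 \<and> r \<noteq> [] \<and> a = x \<and> hd r = y}"
  have cA: "card ?A = (if r \<noteq> [] \<and> a = x \<and> hd r = y then 1 else 0)"
  proof -
    have "?A = (if r \<noteq> [] \<and> a = x \<and> hd r = y then {0} else {})" by auto
    then show ?thesis by simp
  qed
  have u: "card (?A \<union> Suc ` ?S) = card ?A + card (Suc ` ?S)"
    by (rule card_Un_disjoint) (use \<open>finite ?S\<close> in auto)
  have "card (Suc ` ?S) = card ?S" by (simp add: card_image)
  then show ?case unfolding e cnt2_Cons u cA Cons.IH by simp
qed simp

lemma cnt3_card: "card {j. Suc (Suc j) < length xs \<and> xs ! j = x \<and> xs ! Suc j = y \<and> xs ! Suc (Suc j) = z} = cnt3 x y z xs"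
proof (induction xs)
  case (Cons a r)
  let ?S = "{j. Suc (Suc j) < length r \<and> r ! j = x \<and> r ! Suc j = y \<and> r ! Suc (Suc j) = z}"
  have e: "{j. Suc (Suc j) < length (a # r) \<and> (a # r) ! j = x \<and> (a # r) ! Suc j = y \<and> (a # r) ! Suc (Suc j) = z}
     = {j. j = 0 \<and> 2 \<le> length r \<and> a = x \<and> r ! 0 = y \<and> r ! 1 = z} \<union> Suc ` ?S"
  proof (rule set_eqI)
    fix j show "j \<in> {j. Suc (Suc j) < length (a # r) \<and> (a # r) ! j = x \<and> (a # r) ! Suc j = y \<and> (a # r) ! Suc (Suc j) = z} \<longleftrightarrow>
       j \<in> {j. j = 0 \<and> 2 \<le> length r \<and> a = x \<and> r ! 0 = y \<and> r ! 1 = z} \<union> Suc ` ?S"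
      by (cases j) auto
  qed
  have "finite ?S" by (rule finite_subset[of _ "{..<length r}"]) auto
  let ?A = "{j::nat. j = 0 \<and> 2 \<le> length r \<and> a = x \<and> r ! 0 = y \<and> r ! 1 = z}"
  have cA: "card ?A = (if 2 \<le> length r \<and> a = x \<and> r ! 0 = y \<and> r ! 1 = z then 1 else 0)"
  proof -
    have "?A = (if 2 \<le> length r \<and> a = x \<and> r ! 0 = y \<and> r ! 1 = z then {0} else {})" by auto
    then show ?thesis by simp
  qed
  have u: "card (?A \<union> Suc ` ?S) = card ?A + card (Suc ` ?S)"
    by (rule card_Un_disjoint) (use \<open>finite ?S\<close> in auto)
  have "card (Suc ` ?S) = card ?S" by (simp add: card_image)
  then show ?case unfolding e cnt3_Cons u cA Cons.IH by simp
qed simp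



lemma run_end:
  fixes p :: "int list"
  assumes "a < length p" "v \<le> p ! a"
  shows "\<exists>b. a \<le> b \<and> b < length p \<and> (\<forall>i. a \<le> i \<and> i \<le> b \<longrightarrow> v \<le> p ! i) \<and> (b = length p - 1 \<or> p ! Suc b < v)"
  using assms
proof (induction "length p - 1 - a" arbitrary: a)
  case 0
  then show ?case by (intro exI[of _ a]) auto
next
  case (Suc d)
  show ?case
  proof (cases "p ! Suc a < v")
    case True
    then show ?thesis using Suc.prems by (intro exI[of _ a]) auto
  next
    case False
    have dd: "d = length p - 1 - Suc a" using Suc.hyps by simp
    have sa: "Suc a < length p" using Suc.hyps(2) by simp
    have sv: "v \<le> p ! Suc a" using False by simp
    from Suc.hyps(1)[OF dd sa sv] obtain b where b: "Suc a \<le> b" "b < length p"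
      "\<forall>i. Suc a \<le> i \<and> i \<le> b \<longrightarrow> v \<le> p ! i" "b = length p - 1 \<or> p ! Suc b < v"
      by blast
    show ?thesis
    proof (intro exI[of _ b] conjI allI impI)
      fix i assume "a \<le> i \<and> i \<le> b"
      then show "v \<le> p ! i" using b(3) Suc.prems by (cases "i = a") auto
    qed (use b in auto)
  qed
qed

lemma blocks_uniq:
  assumes "(a, b) \<in> blocks p n" "(a, b') \<in> blocks p n"
  shows "b = b'"
proof (rule ccontr)
  have gen: "False" if "(a, b) \<in> blocks p n" "(a, b') \<in> blocks p n" "b < b'" for b b'
  proof -
    have "b < length p - 1" using that by (auto simp: blocks_def)
    then have "p ! Suc b < int n" using that(1) by (auto simp: blocks_def)
    moreover have "int n \<le> p ! Suc b" using that by (auto simp: blocks_def)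
    ultimately show False by simp
  qed
  assume "b \<noteq> b'"
  then show False using gen assms by (metis linorder_neqE_nat)
qed

lemma blocks_start:
  assumes "(a, b) \<in> blocks p n" "p ! 0 < int n" "stp p"
  shows "1 \<le> a \<and> p ! (a - 1) = int n - 1 \<and> p ! a = int n \<and> (a < b \<longrightarrow> p ! Suc a = int n + 1)"
proof -
  from assms(1) have ab: "a \<le> b" "b < length p" "\<forall>j. a \<le> j \<and> j \<le> b \<longrightarrow> int n \<le> p ! j"
    "a = 0 \<or> p ! (a - 1) < int n" by (auto simp: blocks_def)
  have a1: "1 \<le> a" using ab assms(2) by (cases a) auto
  have st: "\<forall>j. Suc j < length p \<longrightarrow> \<bar>p ! Suc j - p ! j\<bar> = 1" using assms(3) stp_iff by blast
  have "\<bar>p ! a - p ! (a - 1)\<bar> = 1" using st[rule_format, of "a - 1"] a1 ab by simp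
  moreover have "int n \<le> p ! a" using ab by auto
  moreover have "p ! (a - 1) < int n" using ab a1 by auto
  ultimately have 1: "p ! (a - 1) = int n - 1 \<and> p ! a = int n" by linarith
  have 2: "p ! Suc a = int n + 1" if "a < b"
  proof -
    have "\<bar>p ! Suc a - p ! a\<bar> = 1" using st[rule_format, of a] that ab by simp
    moreover have "int n \<le> p ! Suc a" using ab that by auto
    ultimately show ?thesis using 1 by linarith
  qed
  show ?thesis using a1 1 2 by blast
qed

lemma blocks_card:
  assumes "p ! 0 < int n" "stp p"
  shows "card (blocks p n) = card {j. Suc j < length p \<and> p ! j = int n - 1 \<and> p ! Suc j = int n}"
    and "card {(a, b) \<in> blocks p n. a < b} =
         card {j. Suc (Suc j) < length p \<and> p ! j = int n - 1 \<and> p ! Suc j = int n \<and> p ! Suc (Suc j) = int n + 1}"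
proof -
  let ?f = "\<lambda>(a::nat, b::nat). a - 1"
  have inj: "inj_on ?f (blocks p n)"
  proof (rule inj_onI)
    fix x y assume xy: "x \<in> blocks p n" "y \<in> blocks p n" "?f x = ?f y"
    obtain a b where x: "x = (a, b)" by (cases x)
    obtain a' b' where y: "y = (a', b')" by (cases y)
    have "1 \<le> a" "1 \<le> a'" using blocks_start[OF _ assms] xy x y by blast+
    then have "a = a'" using xy x y by simp
    then show "x = y" using blocks_uniq xy x y by blast
  qed
  have st: "\<forall>j. Suc j < length p \<longrightarrow> \<bar>p ! Suc j - p ! j\<bar> = 1" using assms(2) stp_iff by blast
  have mk: "(Suc j, b) \<in> blocks p n" if "Suc j \<le> b" "b < length p"
      "\<forall>i. Suc j \<le> i \<and> i \<le> b \<longrightarrow> int n \<le> p ! i" "b = length p - 1 \<or> p ! Suc b < int n"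
      "p ! j = int n - 1" for j b
    using that by (auto simp: blocks_def)
  have im1: "?f ` blocks p n = {j. Suc j < length p \<and> p ! j = int n - 1 \<and> p ! Suc j = int n}"
  proof (rule set_eqI iffI)+
    fix j assume "j \<in> ?f ` blocks p n"
    then obtain a b where ab: "(a, b) \<in> blocks p n" "j = a - 1" by auto
    then have "a < length p" by (auto simp: blocks_def)
    then show "j \<in> {j. Suc j < length p \<and> p ! j = int n - 1 \<and> p ! Suc j = int n}"
      using blocks_start[OF ab(1) assms] ab by auto
  next
    fix j assume "j \<in> {j. Suc j < length p \<and> p ! j = int n - 1 \<and> p ! Suc j = int n}"
    then have j: "Suc j < length p" "p ! j = int n - 1" "p ! Suc j = int n" by auto
    obtain b where b: "Suc j \<le> b" "b < length p" "\<forall>i. Suc j \<le> i \<and> i \<le> b \<longrightarrow> int n \<le> p ! i"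
      "b = length p - 1 \<or> p ! Suc b < int n"
      using run_end[of "Suc j" p "int n"] j by auto
    have "(Suc j, b) \<in> blocks p n" using mk[OF b j(2)] .
    then show "j \<in> ?f ` blocks p n" by force
  qed
  show "card (blocks p n) = card {j. Suc j < length p \<and> p ! j = int n - 1 \<and> p ! Suc j = int n}"
    using card_image[OF inj] im1 by simp
  have inj2: "inj_on ?f {(a, b) \<in> blocks p n. a < b}" by (rule inj_on_subset[OF inj]) auto
  have im2: "?f ` {(a, b) \<in> blocks p n. a < b} =
     {j. Suc (Suc j) < length p \<and> p ! j = int n - 1 \<and> p ! Suc j = int n \<and> p ! Suc (Suc j) = int n + 1}"
  proof (rule set_eqI iffI)+
    fix j assume "j \<in> ?f ` {(a, b) \<in> blocks p n. a < b}"
    then obtain a b where ab: "(a, b) \<in> blocks p n" "a < b" "j = a - 1" by auto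
    then have "b < length p" by (auto simp: blocks_def)
    then show "j \<in> {j. Suc (Suc j) < length p \<and> p ! j = int n - 1 \<and> p ! Suc j = int n \<and> p ! Suc (Suc j) = int n + 1}"
      using blocks_start[OF ab(1) assms] ab by auto
  next
    fix j assume "j \<in> {j. Suc (Suc j) < length p \<and> p ! j = int n - 1 \<and> p ! Suc j = int n \<and> p ! Suc (Suc j) = int n + 1}"
    then have j: "Suc (Suc j) < length p" "p ! j = int n - 1" "p ! Suc j = int n" "p ! Suc (Suc j) = int n + 1" by auto
    obtain b where b: "Suc j \<le> b" "b < length p" "\<forall>i. Suc j \<le> i \<and> i \<le> b \<longrightarrow> int n \<le> p ! i"
      "b = length p - 1 \<or> p ! Suc b < int n"
      using run_end[of "Suc j" p "int n"] j by auto
    have "(Suc j, b) \<in> blocks p n" using mk[OF b j(2)] .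
    moreover have "Suc j < b" using b j by (cases "b = Suc j") auto
    ultimately show "j \<in> ?f ` {(a, b) \<in> blocks p n. a < b}" by force
  qed
  show "card {(a, b) \<in> blocks p n. a < b} =
         card {j. Suc (Suc j) < length p \<and> p ! j = int n - 1 \<and> p ! Suc j = int n \<and> p ! Suc (Suc j) = int n + 1}"
    using card_image[OF inj2] im2 by simp
qed



definition UA :: "int list \<Rightarrow> nat \<Rightarrow> nat set" where
  "UA p n = {j. Suc j < length p \<and> p ! j = int n - 1 \<and> p ! Suc j = int n}"
definition UB :: "int list \<Rightarrow> nat \<Rightarrow> nat set" where
  "UB p n = {j. Suc (Suc j) < length p \<and> p ! j = int n - 1 \<and> p ! Suc j = int n \<and> p ! Suc (Suc j) = int n + 1}"

lemma finite_UA: "finite (UA p n)" by (rule finite_subset[of _ "{..<length p}"]) (auto simp: UA_def)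
lemma finite_UB: "finite (UB p n)" by (rule finite_subset[of _ "{..<length p}"]) (auto simp: UB_def)

lemma kappa_nth: "n \<le> M \<Longrightarrow> kappa M p ! n = int (card (blocks p n))"
  by (simp add: kappa_def del: upt_Suc)
lemma beta_nth: "n \<le> M \<Longrightarrow> beta M p ! n = int (card {(a, b) \<in> blocks p n. a < b})"
  by (simp add: beta_def del: upt_Suc)
lemma kappa_len: "length (kappa M p) = Suc M" by (simp add: kappa_def)
lemma beta_len: "length (beta M p) = Suc M" by (simp add: beta_def)

lemma first_cross:
  fixes p :: "int list"
  assumes "stp p" "i < length p" "p ! 0 < v" "v \<le> p ! i"
  shows "\<exists>j. Suc j \<le> i \<and> p ! j = v - 1 \<and> p ! Suc j = v \<and> (\<forall>t\<le>j. p ! t < v)"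
proof -
  let ?P = "\<lambda>i. i < length p \<and> v \<le> p ! i"
  define i0 where "i0 = (LEAST i. ?P i)"
  have P0: "?P i0" unfolding i0_def by (rule LeastI[of ?P i]) (use assms in auto)
  have le: "i0 \<le> i" unfolding i0_def by (rule Least_le) (use assms in auto)
  have nz: "i0 \<noteq> 0"
  proof
    assume "i0 = 0" then show False using P0 assms(3) by simp
  qed
  have below: "\<forall>t<i0. p ! t < v"
  proof (intro allI impI)
    fix t assume "t < i0"
    then have "\<not> ?P t" unfolding i0_def by (rule not_less_Least)
    moreover have "t < length p" using \<open>t < i0\<close> P0 by simp
    ultimately show "p ! t < v" by simp
  qed
  have st: "\<bar>p ! Suc (i0 - 1) - p ! (i0 - 1)\<bar> = 1"
    using assms(1) stp_iff P0 nz by (metis Suc_pred' not_gr_zero)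
  have "p ! (i0 - 1) < v" using below nz by simp
  then have "p ! (i0 - 1) = v - 1 \<and> p ! i0 = v" using st P0 nz by (simp add: abs_if split: if_splits)
  then show ?thesis using le nz below
    by (intro exI[of _ "i0 - 1"]) auto
qed

locale sseq =
  fixes M :: nat and p :: "int list"
  assumes mem: "p \<in> scattering_seqs M"
begin

lemma len: "3 \<le> length p" using mem by (simp add: scattering_seqs_def)
lemma p0: "p ! 0 = -1" using mem by (simp add: scattering_seqs_def)
lemma plast: "p ! (length p - 1) = -1" using mem by (simp add: scattering_seqs_def)
lemma mid: "1 \<le> j \<Longrightarrow> j \<le> length p - 2 \<Longrightarrow> 0 \<le> p ! j \<and> p ! j \<le> int M"
  using mem by (simp add: scattering_seqs_def)
lemma stp: "stp p"
  using mem unfolding stp_iff scattering_seqs_def by auto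
lemma mid2: "j < length p \<Longrightarrow> j \<noteq> 0 \<Longrightarrow> j \<noteq> length p - 1 \<Longrightarrow> 0 \<le> p ! j \<and> p ! j \<le> int M"
  by (rule mid) arith+
lemma ge: "j < length p \<Longrightarrow> -1 \<le> p ! j"
  using mid2[of j] p0 plast by (cases "j = 0"; cases "j = length p - 1") auto
lemma le: "j < length p \<Longrightarrow> p ! j \<le> int M"
  using mid2[of j] p0 plast by (cases "j = 0"; cases "j = length p - 1") auto
lemma st: "Suc j < length p \<Longrightarrow> \<bar>p ! Suc j - p ! j\<bar> = 1"
  using stp stp_iff by blast

lemma kap: "n \<le> M \<Longrightarrow> kappa M p ! n = int (card (UA p n))"
  using kappa_nth blocks_card(1)[of p n] p0 stp by (simp add: UA_def)
lemma bet: "n \<le> M \<Longrightarrow> beta M p ! n = int (card (UB p n))"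
  using beta_nth blocks_card(2)[of p n] p0 stp by (simp add: UB_def)

lemma UA0: "UA p 0 = {0}"
proof -
  have "p ! 1 = 0" using st[of 0] mid[of 1] len p0 by simp
  moreover have "j = 0" if "j \<in> UA p 0" for j
  proof (rule ccontr)
    assume "j \<noteq> 0"
    moreover have "Suc j < length p" "p ! j = -1" using that by (auto simp: UA_def)
    moreover have "j \<noteq> length p - 1" using calculation by arith
    ultimately show False using mid2[of j] by simp
  qed
  ultimately show ?thesis using len p0 by (auto simp: UA_def)
qed

lemma UA_prev:
  assumes "1 \<le> n" "UA p n \<noteq> {}"
  shows "UA p (n - 1) \<noteq> {}"
proof -
  obtain j where j: "Suc j < length p" "p ! Suc j = int n" using assms by (auto simp: UA_def)
  obtain j' where "Suc j' \<le> Suc j" "p ! j' = int (n - 1) - 1" "p ! Suc j' = int (n - 1)"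
    using first_cross[OF stp j(1), of "int (n - 1)"] p0 j assms(1) by auto
  then have "j' \<in> UA p (n - 1)" using j by (auto simp: UA_def)
  then show ?thesis by blast
qed

lemma UB_sub: "UB p n \<subseteq> UA p n" by (auto simp: UA_def UB_def)
lemma UB_Suc: "card (UB p n) \<le> card (UA p (Suc n))"
proof -
  have "Suc ` UB p n \<subseteq> UA p (Suc n)" by (auto simp: UA_def UB_def)
  then have "card (Suc ` UB p n) \<le> card (UA p (Suc n))" by (rule card_mono[OF finite_UA])
  then show ?thesis by (simp add: card_image)
qed
lemma UB_top: "UB p M = {}"
proof -
  have False if "j \<in> UB p M" for j
    using that le[of "Suc (Suc j)"] by (auto simp: UB_def)
  then show ?thesis by blast
qed
lemma UB_ne:
  assumes "UA p (Suc n) \<noteq> {}"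
  shows "UB p n \<noteq> {}"
proof -
  obtain j where j: "Suc j < length p" "p ! Suc j = int n + 1" using assms by (auto simp: UA_def)
  obtain j' where j': "Suc j' \<le> Suc j" "p ! j' = int n" "p ! Suc j' = int n + 1" "\<forall>t\<le>j'. p ! t < int n + 1"
    using first_cross[OF stp j(1), of "int n + 1"] p0 j by auto
  have "j' \<noteq> 0"
  proof
    assume "j' = 0" then show False using j'(2) p0 by simp
  qed
  then have "\<bar>p ! Suc (j' - 1) - p ! (j' - 1)\<bar> = 1" using st[of "j' - 1"] j' j by simp
  moreover have "p ! (j' - 1) < int n + 1" using j' by simp
  ultimately have "p ! (j' - 1) = int n - 1" using j' \<open>j' \<noteq> 0\<close> by (simp add: abs_if split: if_splits)
  then have "j' - 1 \<in> UB p n" using j' j \<open>j' \<noteq> 0\<close> by (auto simp: UB_def)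
  then show ?thesis by blast
qed


lemma forward_k: "kappa M p \<in> frakL M"
proof -
  have "kappa M p ! 0 = 1" using kap[of 0] UA0 by simp
  moreover have "kappa M p ! (n - 1) > 0" if "1 \<le> n" "n \<le> M" "kappa M p ! n > 0" for n
  proof -
    have "UA p n \<noteq> {}" using that kap[of n] by (auto simp: card_gt_0_iff)
    then have "UA p (n - 1) \<noteq> {}" using UA_prev that by blast
    then show ?thesis using kap[of "n - 1"] that finite_UA by (simp add: card_gt_0_iff)
  qed
  ultimately show ?thesis using kap by (auto simp: frakL_def kappa_len)
qed

end

lemma ktilde_nth: "length k = Suc M \<Longrightarrow> n \<le> M \<Longrightarrow> ktilde k ! n = (if n < M then k ! Suc n else 0)"
  by (auto simp: ktilde_def nth_append nth_tl)

context sseq begin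

lemma forward_b:
  assumes "n \<le> M"
  shows "min 1 (ktilde (kappa M p) ! n) \<le> beta M p ! n \<and> beta M p ! n \<le> min (kappa M p ! n) (ktilde (kappa M p) ! n)"
proof (cases "n < M")
  case True
  have kt: "ktilde (kappa M p) ! n = int (card (UA p (Suc n)))"
    using ktilde_nth[OF kappa_len assms] True kap[of "Suc n"] by simp
  have b: "beta M p ! n = int (card (UB p n))" using bet assms by simp
  have k: "kappa M p ! n = int (card (UA p n))" using kap assms by simp
  have u1: "card (UB p n) \<le> card (UA p n)" by (rule card_mono[OF finite_UA UB_sub])
  have u2: "card (UB p n) \<le> card (UA p (Suc n))" by (rule UB_Suc)
  have l: "min 1 (int (card (UA p (Suc n)))) \<le> int (card (UB p n))"
  proof (cases "UA p (Suc n) = {}")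
    case True then show ?thesis by simp
  next
    case False
    then have "UB p n \<noteq> {}" by (rule UB_ne)
    then have "card (UB p n) > 0" using finite_UB by (simp add: card_gt_0_iff)
    then show ?thesis by simp
  qed
  show ?thesis unfolding kt b k using u1 u2 l by simp
next
  case False
  then have nM: "n = M" using assms by simp
  have kt: "ktilde (kappa M p) ! n = 0" using ktilde_nth[OF kappa_len assms] False by simp
  have b: "beta M p ! n = 0" using bet assms UB_top nM by simp
  have k: "kappa M p ! n \<ge> 0" using kap assms by simp
  show ?thesis unfolding kt b using k by simp
qed

end



fun fp :: "int \<Rightarrow> int list list \<Rightarrow> int list" where
  "fp v [] = [v - 1]"
| "fp v (s # B) = (v - 1) # s @ fp v B"

definition valid :: "int \<Rightarrow> int list \<Rightarrow> bool" where
  "valid v s \<longleftrightarrow> s \<noteq> [] \<and> hd s = v \<and> last s = v \<and> (\<forall>x\<in>set s. v \<le> x) \<and> stp s"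

definition c2 :: "int \<Rightarrow> int list list \<Rightarrow> nat" where
  "c2 m B = sum_list (map (cnt2 (m - 1) m) B)"
definition c3 :: "int \<Rightarrow> int list list \<Rightarrow> nat" where
  "c3 m B = sum_list (map (cnt3 (m - 1) m (m + 1)) B)"
definition nb :: "int list list \<Rightarrow> nat" where
  "nb B = length (filter (\<lambda>s. 2 \<le> length s) B)"

lemma fp_ne: "fp v B \<noteq> [] \<and> hd (fp v B) = v - 1 \<and> last (fp v B) = v - 1"
  by (induction B) auto

lemma fp_set: "set (fp v B) = insert (v - 1) (\<Union> (set ` set B))"
  by (induction B) auto

lemma fp_len: "(2 \<le> length (fp v B)) = (B \<noteq> [])"
  by (induction B) auto

lemma fp_valid: "(\<forall>s\<in>set B. valid v s) \<Longrightarrow> valid (v - 1) (fp v B)"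
proof (induction B)
  case Nil
  then show ?case by (simp add: valid_def)
next
  case (Cons s B)
  then have vs: "valid v s" and IH: "valid (v - 1) (fp v B)" by auto
  have "stp (s @ fp v B)" using vs IH fp_ne[of v B] by (simp add: stp_append valid_def)
  moreover have "hd (s @ fp v B) = v" using vs by (simp add: valid_def)
  ultimately have "stp ((v - 1) # s @ fp v B)" using vs by (simp add: stp_Cons valid_def)
  moreover have "\<forall>x\<in>set (fp v (s # B)). v - 1 \<le> x" using vs IH by (force simp: valid_def)
  ultimately show ?case using fp_ne[of v "s # B"] by (simp add: valid_def)
qed

lemma cnt_zero:
  "(\<forall>x\<in>set s. x \<noteq> a) \<Longrightarrow> cnt2 a b s = 0 \<and> cnt3 a b c s = 0"
  by (induction s) (auto simp: cnt2_Cons cnt3_Cons)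

lemma drop_last: "xs \<noteq> [] \<Longrightarrow> drop (length xs - 1) xs = [last xs]"
proof -
  assume "xs \<noteq> []"
  then obtain ys y where "xs = ys @ [y]" using rev_exhaust by blast
  then show ?thesis by simp
qed

lemma take1: "xs \<noteq> [] \<Longrightarrow> take 1 xs = [hd xs]"
  by (cases xs) auto

lemma valid_second: "valid v s \<Longrightarrow> 2 \<le> length s \<Longrightarrow> s ! 1 = v + 1"
proof -
  assume vs: "valid v s" and l: "2 \<le> length s"
  have "\<bar>s ! 1 - s ! 0\<bar> = 1" using vs l stp_iff[of s] by (auto simp: valid_def)
  moreover have "s ! 0 = v" using vs by (metis hd_conv_nth valid_def)
  moreover have "v \<le> s ! 1" using vs l by (auto simp: valid_def)
  ultimately show ?thesis by linarith
qed

lemma fp_cnt2: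
  "(\<forall>s\<in>set B. valid v s) \<Longrightarrow> cnt2 (m - 1) m (fp v B) = (if m = v then length B else 0) + c2 m B"
proof (induction B)
  case Nil
  then show ?case by (simp add: c2_def)
next
  case (Cons s B)
  then have vs: "valid v s" and IH: "cnt2 (m - 1) m (fp v B) = (if m = v then length B else 0) + c2 m B" by auto
  have ne: "s \<noteq> []" "hd s = v" "last s = v" using vs by (auto simp: valid_def)
  have d: "drop (length s - 1) s = [v]" using drop_last[OF ne(1)] ne(3) by simp
  have t: "take 1 (fp v B) = [v - 1]" using take1[of "fp v B"] fp_ne[of v B] by simp
  have w: "cnt2 (m - 1) m (drop (length s - 1) s @ take 1 (fp v B)) = 0"
    unfolding d t by simp
  have "cnt2 (m - 1) m (fp v (s # B)) = (if m = v then 1 else 0) + cnt2 (m - 1) m (s @ fp v B)"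
    using ne by (simp add: cnt2_Cons)
  also have "\<dots> = (if m = v then 1 else 0) + cnt2 (m - 1) m s + cnt2 (m - 1) m (fp v B)"
    by (subst cnt2_append) (use w in linarith)
  finally show ?case using IH by (simp add: c2_def)
qed

lemma win0: "length xs \<le> 1 \<Longrightarrow> length ys \<le> 1 \<Longrightarrow> cnt3 (m - 1) m (m + 1) (xs @ [v, v - 1] @ ys) = 0"
  by (cases xs; cases ys) (auto simp: cnt3_Cons)

lemma win:
  assumes "D \<noteq> []" "last D = v" "T \<noteq> []" "hd T = v - 1" "length D \<le> 2" "length T \<le> 2"
  shows "cnt3 (m - 1) m (m + 1) (D @ T) = 0"
proof -
  have "D = butlast D @ [v]" using assms by (metis append_butlast_last_id)
  moreover have "T = [v - 1] @ tl T" using assms by (cases T) auto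
  ultimately have "D @ T = butlast D @ [v, v - 1] @ tl T" by (metis append.assoc append_Cons append_Nil)
  moreover have "length (butlast D) \<le> 1" "length (tl T) \<le> 1" using assms by auto
  ultimately show ?thesis using win0 by metis
qed

lemma fp_cnt3:
  "(\<forall>s\<in>set B. valid v s) \<Longrightarrow> cnt3 (m - 1) m (m + 1) (fp v B) = (if m = v then nb B else 0) + c3 m B"
proof (induction B)
  case Nil
  then show ?case by (simp add: c3_def nb_def)
next
  case (Cons s B)
  then have vs: "valid v s" and IH: "cnt3 (m - 1) m (m + 1) (fp v B) = (if m = v then nb B else 0) + c3 m B" by auto
  have ne: "s \<noteq> []" "hd s = v" "last s = v" using vs by (auto simp: valid_def)
  have w: "cnt3 (m - 1) m (m + 1) (drop (length s - 2) s @ take 2 (fp v B)) = 0"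
  proof (rule win)
    show "drop (length s - 2) s \<noteq> []" using ne by (cases s) auto
    show "take 2 (fp v B) \<noteq> []" using fp_ne[of v B] by auto
    show "last (drop (length s - 2) s) = v" using ne by (simp add: last_drop)
    show "hd (take 2 (fp v B)) = v - 1" using fp_ne[of v B] by simp
  qed auto
  have first: "(if 2 \<le> length (s @ fp v B) \<and> v - 1 = m - 1 \<and> (s @ fp v B) ! 0 = m \<and> (s @ fp v B) ! 1 = m + 1 then 1 else 0)
      = (if m = v \<and> 2 \<le> length s then 1 else (0::nat))"
  proof (cases "2 \<le> length s")
    case True
    then show ?thesis using valid_second[OF vs True] ne by (auto simp: nth_append hd_conv_nth)
  next
    case False
    then have "length s = 1" using ne(1) length_greater_0_conv[of s] by linarith
    then have "(s @ fp v B) ! 1 = v - 1" using fp_ne[of v B] by (auto simp: nth_append hd_conv_nth)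
    then show ?thesis using False by auto
  qed
  have "cnt3 (m - 1) m (m + 1) (fp v (s # B)) = (if m = v \<and> 2 \<le> length s then 1 else 0) + cnt3 (m - 1) m (m + 1) (s @ fp v B)"
    using first by (simp only: fp.simps cnt3_Cons)
  also have "\<dots> = (if m = v \<and> 2 \<le> length s then 1 else 0) + cnt3 (m - 1) m (m + 1) s + cnt3 (m - 1) m (m + 1) (fp v B)"
    by (subst cnt3_append) (use w in linarith)
  finally show ?case using IH by (simp add: c3_def nb_def)
qed

lemma c2_append: "c2 m (xs @ ys) = c2 m xs + c2 m ys" by (simp add: c2_def)
lemma c3_append: "c3 m (xs @ ys) = c3 m xs + c3 m ys" by (simp add: c3_def)
lemma nb_append: "nb (xs @ ys) = nb xs + nb ys" by (simp add: nb_def)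

lemma grp_cnt2:
  "\<forall>g\<in>set G. \<forall>s\<in>set g. valid (v + 1) s \<Longrightarrow>
   c2 m (map (fp (v + 1)) G) = (if m = v + 1 then length (concat G) else 0) + c2 m (concat G)"
proof (induction G)
  case (Cons g G)
  then have IH: "c2 m (map (fp (v + 1)) G) = (if m = v + 1 then length (concat G) else 0) + c2 m (concat G)"
    and f: "cnt2 (m - 1) m (fp (v + 1) g) = (if m = v + 1 then length g else 0) + c2 m g"
    using fp_cnt2[of g "v + 1" m] by auto
  have "c2 m (map (fp (v + 1)) (g # G)) = cnt2 (m - 1) m (fp (v + 1) g) + c2 m (map (fp (v + 1)) G)"
    by (simp add: c2_def)
  then show ?case using IH f by (simp add: c2_append)
qed (simp add: c2_def)

lemma grp_cnt3:
  "\<forall>g\<in>set G. \<forall>s\<in>set g. valid (v + 1) s \<Longrightarrow>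
   c3 m (map (fp (v + 1)) G) = (if m = v + 1 then nb (concat G) else 0) + c3 m (concat G)"
proof (induction G)
  case (Cons g G)
  then have IH: "c3 m (map (fp (v + 1)) G) = (if m = v + 1 then nb (concat G) else 0) + c3 m (concat G)"
    and f: "cnt3 (m - 1) m (m + 1) (fp (v + 1) g) = (if m = v + 1 then nb g else 0) + c3 m g"
    using fp_cnt3[of g "v + 1" m] by auto
  have "c3 m (map (fp (v + 1)) (g # G)) = cnt3 (m - 1) m (m + 1) (fp (v + 1) g) + c3 m (map (fp (v + 1)) G)"
    by (simp add: c3_def)
  then show ?case using IH f by (simp add: c3_append nb_append)
qed (simp add: c3_def nb_def)

lemma groups:
  assumes "bn \<le> kn" "bn \<le> length C" "C \<noteq> [] \<Longrightarrow> bn \<noteq> 0"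
  shows "\<exists>G. concat G = C \<and> length G = kn \<and> length (filter (\<lambda>g. g \<noteq> []) G) = bn"
proof (cases "bn = 0")
  case True
  then show ?thesis using assms by (intro exI[of _ "replicate kn []"]) auto
next
  case False
  let ?t = "length C - bn + 1"
  let ?G = "take ?t C # map (\<lambda>s. [s]) (drop ?t C) @ replicate (kn - bn) []"
  have "concat ?G = C" by (simp add: concat_map_singleton)
  moreover have "length ?G = kn" using assms False by simp
  moreover have "take ?t C \<noteq> []" using assms False by auto
  then have "length (filter (\<lambda>g. g \<noteq> []) ?G) = bn" using assms False
    by (simp add: filter_map o_def)
  ultimately show ?thesis by blast
qed



lemma c_zero:
  "(\<forall>s\<in>set C. valid v s) \<Longrightarrow> m \<le> v \<Longrightarrow> c2 m C = 0 \<and> c3 m C = 0"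
proof (induction C)
  case (Cons s C)
  then have "\<forall>x\<in>set s. x \<noteq> m - 1" by (auto simp: valid_def)
  then have "cnt2 (m - 1) m s = 0 \<and> cnt3 (m - 1) m (m + 1) s = 0" using cnt_zero by blast
  then show ?case using Cons by (simp add: c2_def c3_def)
qed (simp add: c2_def c3_def)

locale data =
  fixes M :: nat and k b :: "int list"
  assumes kL: "k \<in> frakL M" and bl: "length b = Suc M"
    and box: "\<forall>n\<le>M. min 1 (ktilde k ! n) \<le> b ! n \<and> b ! n \<le> min (k ! n) (ktilde k ! n)"
begin

definition kk :: "nat \<Rightarrow> nat" where "kk m = (if m \<le> M then nat (k ! m) else 0)"
definition bb :: "nat \<Rightarrow> nat" where "bb m = (if m \<le> M then nat (b ! m) else 0)"

lemma kl: "length k = Suc M" using kL by (simp add: frakL_def)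
lemma knn: "n \<le> M \<Longrightarrow> 0 \<le> k ! n" using kL by (simp add: frakL_def)
lemma kint: "n \<le> M \<Longrightarrow> int (kk n) = k ! n" using knn by (simp add: kk_def)
lemma kk0: "kk 0 = 1" using kL by (simp add: frakL_def kk_def)
lemma kt: "n \<le> M \<Longrightarrow> ktilde k ! n = int (kk (Suc n))"
  using ktilde_nth[OF kl] knn[of "Suc n"] by (auto simp: kk_def)

lemma bprops:
  assumes "n \<le> M"
  shows "int (bb n) = b ! n" "bb n \<le> kk n" "bb n \<le> kk (Suc n)" "kk (Suc n) \<noteq> 0 \<Longrightarrow> bb n \<noteq> 0"
proof -
  have h: "min 1 (int (kk (Suc n))) \<le> b ! n" "b ! n \<le> min (int (kk n)) (int (kk (Suc n)))"
    using box assms kt[OF assms] kint[OF assms] by auto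
  then have b0: "0 \<le> b ! n" by simp
  then show "int (bb n) = b ! n" using assms by (simp add: bb_def)
  show "bb n \<le> kk n" "bb n \<le> kk (Suc n)" using h b0 assms by (auto simp: bb_def)
  show "kk (Suc n) \<noteq> 0 \<Longrightarrow> bb n \<noteq> 0" using h b0 assms by (auto simp: bb_def)
qed

lemma build:
  "n \<le> Suc M \<Longrightarrow> \<exists>B. (\<forall>s\<in>set B. valid (int n) s \<and> (\<forall>x\<in>set s. x \<le> int M)) \<and> length B = kk n \<and> nb B = bb n
     \<and> (\<forall>m>n. c2 (int m) B = kk m \<and> c3 (int m) B = bb m)"
proof (induction "Suc M - n" arbitrary: n)
  case 0
  then have n: "n = Suc M" by simp
  show ?case by (intro exI[of _ "[]"]) (simp add: n kk_def bb_def c2_def c3_def nb_def)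
next
  case (Suc d)
  then have nM: "n \<le> M" by simp
  have "d = Suc M - Suc n" "Suc n \<le> Suc M" using Suc by auto
  from Suc.hyps(1)[OF this] obtain C where
    Cv: "\<forall>s\<in>set C. valid (int n + 1) s \<and> (\<forall>x\<in>set s. x \<le> int M)" and
    Cl: "length C = kk (Suc n)" and Cnb: "nb C = bb (Suc n)" and
    Cc: "\<forall>m>Suc n. c2 (int m) C = kk m \<and> c3 (int m) C = bb m"
    by (auto simp: add.commute)
  obtain G where G: "concat G = C" "length G = kk n" "length (filter (\<lambda>g. g \<noteq> []) G) = bb n"
  proof -
    have "C \<noteq> [] \<Longrightarrow> bb n \<noteq> 0" using bprops(4)[OF nM] Cl by (metis length_0_conv)
    moreover have "bb n \<le> length C" using bprops(3)[OF nM] Cl by simp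
    ultimately show ?thesis using groups[of "bb n" "kk n" C] bprops(2)[OF nM] that by blast
  qed
  have Gv: "\<forall>g\<in>set G. \<forall>s\<in>set g. valid (int n + 1) s"
    using Cv G(1) by auto
  define B where "B = map (fp (int n + 1)) G"
  have "\<forall>s\<in>set B. valid (int n) s \<and> (\<forall>x\<in>set s. x \<le> int M)"
  proof
    fix s assume "s \<in> set B"
    then obtain g where g: "g \<in> set G" "s = fp (int n + 1) g" by (auto simp: B_def)
    have "valid (int n + 1 - 1) s" using fp_valid[of g "int n + 1"] Gv g by blast
    moreover have "\<forall>x\<in>set s. x \<le> int M"
      using g fp_set[of "int n + 1" g] Cv G(1) nM by auto
    ultimately show "valid (int n) s \<and> (\<forall>x\<in>set s. x \<le> int M)" by simp
  qed
  moreover have "length B = kk n" using G by (simp add: B_def)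
  moreover have "nb B = bb n"
  proof -
    have "nb B = length (filter ((\<lambda>s. 2 \<le> length s) \<circ> fp (int n + 1)) G)"
      by (simp add: B_def nb_def filter_map)
    also have "(\<lambda>s. 2 \<le> length s) \<circ> fp (int n + 1) = (\<lambda>g. g \<noteq> [])"
      using fp_len by (auto simp: o_def)
    finally show ?thesis using G(3) by simp
  qed
  moreover have "c2 (int m) B = kk m \<and> c3 (int m) B = bb m" if "m > n" for m
  proof -
    have e2: "c2 (int m) B = (if int m = int n + 1 then length C else 0) + c2 (int m) C"
      using grp_cnt2[OF Gv] G(1) by (simp add: B_def)
    have e3: "c3 (int m) B = (if int m = int n + 1 then nb C else 0) + c3 (int m) C"
      using grp_cnt3[OF Gv] G(1) by (simp add: B_def)
    show ?thesis
    proof (cases "m = Suc n")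
      case True
      have "c2 (int m) C = 0 \<and> c3 (int m) C = 0" using c_zero[of C "int n + 1" "int m"] Cv True by auto
      then show ?thesis using e2 e3 True Cl Cnb by simp
    next
      case False
      then have "m > Suc n" "int m \<noteq> int n + 1" using that by auto
      then show ?thesis using e2 e3 Cc by simp
    qed
  qed
  ultimately show ?case by blast
qed

lemma realize: "\<exists>p\<in>scattering_seqs M. kappa M p = k \<and> beta M p = b"
proof -
  obtain B where Bv: "\<forall>s\<in>set B. valid 0 s \<and> (\<forall>x\<in>set s. x \<le> int M)" and Bl: "length B = 1"
    and Bnb: "nb B = bb 0" and Bc: "\<forall>m>0. c2 (int m) B = kk m \<and> c3 (int m) B = bb m"
    using build[of 0] kk0 by auto
  obtain r where r: "B = [r]" using Bl by (metis One_nat_def length_0_conv length_Suc_conv)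
  have rv: "valid 0 r" "\<forall>x\<in>set r. x \<le> int M" using Bv r by auto
  define p where "p = fp 0 B"
  have pe: "p = (-1) # r @ [-1]" by (simp add: p_def r)
  have pv: "valid (-1) p" unfolding p_def using fp_valid[of B 0] Bv by simp
  have rne: "r \<noteq> []" using rv by (simp add: valid_def)
  have pS: "p \<in> scattering_seqs M"
  proof -
    have "3 \<le> length p" using rne pe by (cases r) auto
    moreover have "p ! 0 = -1" using pe by simp
    moreover have "p ! (length p - 1) = -1" using pe by (simp add: nth_append)
    moreover have "0 \<le> p ! j \<and> p ! j \<le> int M" if "1 \<le> j" "j \<le> length p - 2" for j
    proof -
      have "j - 1 < length r" using that pe by auto
      moreover have "p ! j = r ! (j - 1)" using that pe calculation
        by (cases j) (auto simp: nth_append)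
      ultimately show ?thesis using rv by (auto simp: valid_def)
    qed
    moreover have "\<forall>j. j < length p - 1 \<longrightarrow> \<bar>p ! Suc j - p ! j\<bar> = 1"
      using pv stp_iff[of p] by (auto simp: valid_def)
    ultimately show ?thesis by (simp add: scattering_seqs_def)
  qed
  have st: "stp p" using pv by (simp add: valid_def)
  have p0: "p ! 0 = -1" using pe by simp
  have r0: "c2 0 [r] = 0 \<and> c3 0 [r] = 0" using c_zero[of "[r]" 0 0] rv by simp
  have "kappa M p = k"
  proof (rule nth_equalityI)
    show "length (kappa M p) = length k" by (simp add: kappa_len kl)
    fix n assume "n < length (kappa M p)"
    then have n: "n \<le> M" by (simp add: kappa_len)
    have "kappa M p ! n = int (cnt2 (int n - 1) (int n) p)"
      using kappa_nth[OF n] blocks_card(1)[of p n] p0 st cnt2_card by simp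
    also have "\<dots> = int ((if int n = 0 then 1 else 0) + c2 (int n) [r])"
      using fp_cnt2[of B 0 "int n"] Bv r by (simp add: p_def)
    also have "\<dots> = k ! n"
    proof (cases "n = 0")
      case True then show ?thesis using r0 kL by (simp add: frakL_def)
    next
      case False then show ?thesis using Bc r kint[OF n] by simp
    qed
    finally show "kappa M p ! n = k ! n" .
  qed
  moreover have "beta M p = b"
  proof (rule nth_equalityI)
    show "length (beta M p) = length b" by (simp add: beta_len bl)
    fix n assume "n < length (beta M p)"
    then have n: "n \<le> M" by (simp add: beta_len)
    have "beta M p ! n = int (cnt3 (int n - 1) (int n) (int n + 1) p)"
      using beta_nth[OF n] blocks_card(2)[of p n] p0 st cnt3_card by simp
    also have "\<dots> = int ((if int n = 0 then nb [r] else 0) + c3 (int n) [r])"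
      using fp_cnt3[of B 0 "int n"] Bv r by (simp add: p_def)
    also have "\<dots> = b ! n"
    proof (cases "n = 0")
      case True then show ?thesis using r0 Bnb r bprops(1)[of 0] by simp
    next
      case False then show ?thesis using Bc r bprops(1)[OF n] by simp
    qed
    finally show "beta M p ! n = b ! n" .
  qed
  ultimately show ?thesis using pS by blast
qed

end



theorem proposition6p1:
  fixes M :: nat
  assumes "M \<ge> 1"
  shows "kappa M ` scattering_seqs M = frakL M
    \<and> (\<forall>k \<in> frakL M.
         {beta M p | p. p \<in> scattering_seqs M \<and> kappa M p = k}
         = {b. length b = Suc M \<and> (\<forall>n \<le> M.
               min 1 (ktilde k ! n) \<le> b ! n \<and> b ! n \<le> min (k ! n) (ktilde k ! n))})"
proof (intro conjI ballI)
  show "kappa M ` scattering_seqs M = frakL M"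
  proof
    show "kappa M ` scattering_seqs M \<subseteq> frakL M"
      using sseq.forward_k sseq.intro by blast
  next
    show "frakL M \<subseteq> kappa M ` scattering_seqs M"
    proof
      fix k assume kL: "k \<in> frakL M"
      define b0 where "b0 = map (\<lambda>n. min 1 (ktilde k ! n)) [0..<Suc M]"
      have kl: "length k = Suc M" using kL by (simp add: frakL_def)
      have "data M k b0"
      proof
        show "k \<in> frakL M" by (rule kL)
        show "length b0 = Suc M" by (simp add: b0_def)
        show "\<forall>n\<le>M. min 1 (ktilde k ! n) \<le> b0 ! n \<and> b0 ! n \<le> min (k ! n) (ktilde k ! n)"
        proof (intro allI impI)
          fix n assume n: "n \<le> M"
          have b: "b0 ! n = min 1 (ktilde k ! n)" using n by (simp add: b0_def del: upt_Suc)
          have kn: "0 \<le> k ! n" using kL n by (simp add: frakL_def)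
          have "min 1 (ktilde k ! n) \<le> k ! n"
          proof (cases "n < M")
            case True
            have "k ! Suc n > 0 \<Longrightarrow> k ! n > 0"
            proof -
              assume "k ! Suc n > 0"
              moreover have "\<forall>m. 1 \<le> m \<and> m \<le> M \<longrightarrow> k ! m > 0 \<longrightarrow> k ! (m - 1) > 0"
                using kL by (simp add: frakL_def)
              ultimately show ?thesis using True by (metis Suc_leI diff_Suc_1 le_add1 plus_1_eq_Suc)
            qed
            then show ?thesis using ktilde_nth[OF kl n] True kn
              by (cases "0 < k ! Suc n") (auto simp: min_def)
          next
            case False then show ?thesis using ktilde_nth[OF kl n] kn by auto
          qed
          then show "min 1 (ktilde k ! n) \<le> b0 ! n \<and> b0 ! n \<le> min (k ! n) (ktilde k ! n)"
            unfolding b by simp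
        qed
      qed
      then obtain p where "p \<in> scattering_seqs M" "kappa M p = k" using data.realize by blast
      then show "k \<in> kappa M ` scattering_seqs M" by blast
    qed
  qed
next
  fix k assume kL: "k \<in> frakL M"
  show "{beta M p | p. p \<in> scattering_seqs M \<and> kappa M p = k}
         = {b. length b = Suc M \<and> (\<forall>n \<le> M.
               min 1 (ktilde k ! n) \<le> b ! n \<and> b ! n \<le> min (k ! n) (ktilde k ! n))}"
  proof
    show "{beta M p | p. p \<in> scattering_seqs M \<and> kappa M p = k} \<subseteq> {b. length b = Suc M \<and> (\<forall>n \<le> M.
               min 1 (ktilde k ! n) \<le> b ! n \<and> b ! n \<le> min (k ! n) (ktilde k ! n))}"
    proof
      fix x assume "x \<in> {beta M p | p. p \<in> scattering_seqs M \<and> kappa M p = k}"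
      then obtain p where p: "p \<in> scattering_seqs M" "kappa M p = k" "x = beta M p" by blast
      interpret sseq M p by (rule sseq.intro[OF p(1)])
      show "x \<in> {b. length b = Suc M \<and> (\<forall>n \<le> M.
               min 1 (ktilde k ! n) \<le> b ! n \<and> b ! n \<le> min (k ! n) (ktilde k ! n))}"
        using forward_b p(2,3) beta_len by auto
    qed
  next
    show "{b. length b = Suc M \<and> (\<forall>n \<le> M.
               min 1 (ktilde k ! n) \<le> b ! n \<and> b ! n \<le> min (k ! n) (ktilde k ! n))}
          \<subseteq> {beta M p | p. p \<in> scattering_seqs M \<and> kappa M p = k}"
    proof
      fix b assume "b \<in> {b. length b = Suc M \<and> (\<forall>n \<le> M.
               min 1 (ktilde k ! n) \<le> b ! n \<and> b ! n \<le> min (k ! n) (ktilde k ! n))}"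
      then have "data M k b" using kL by (auto intro: data.intro)
      then obtain p where "p \<in> scattering_seqs M" "kappa M p = k" "beta M p = b" using data.realize by blast
      then show "b \<in> {beta M p | p. p \<in> scattering_seqs M \<and> kappa M p = k}" by blast
    qed
  qed
qed

end
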